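(* For every $T_1,T_2\in\mathcal{T}_n$, if $\pi(T_1)=\pi(T_2)$ in $\mathfrak{S}_{2n-2}$, then $T_1=T_2$.
   Context: A phylogenetic tree is a finite rooted tree (arcs directed away from the root) with no node of outdegree $1$, whose leaves are injectively labeled. $\mathcal{T}_n$ denotes the set of phylogenetic trees with $n$ leaves labeled $1,\dots,n$, up to label-preserving isomorphism. Internal nodes are the non-leaf nodes; $\mathcal{L}(T)$ is the set of leaves. The height of a node is the length of a longest directed path from it to a leaf. The bottom-up ordering of $T=(V,E)\in\mathcal{T}_n$ is the unique injective map $\ell:V\to\{1,\dots,|V|\}$ such that: (a) for a leaf $v$, $\ell(v)$ is its label; (b) if $\mathrm{height}(u)<\mathrm{height}(v)$ then $\ell(u)<\ell(v)$; (c) if $0<\mathrm{height}(u)=\mathrm{height}(v)$ and $\min\{\ell(x): x \text{ child of } u\}<\min\{\ell(x): x\text{ child of } v\}$ then $\ell(u)<\ell(v)$. For a subset $S=\{i_1<\dots<i_k\}$ with $k\ge 2$, $\kappa(S)$ is the cyclic permutation $(i_1,i_2,\dots,i_k)$ sending $i_1\mapsto i_2\mapsto\dots\mapsto i_k\mapsto i_1$. The matching permutation of $T$ is $\pi(T)=\prod_{u\in V\setminus\mathcal{L}(T)}\kappa(\ell(\mathrm{children}(u)))$ (a product of disjoint cycles), regarded as an element of the symmetric group $\mathfrak{S}_{2n-2}$ fixing $|V|,\dots,2n-2$. *)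

theory Defs
  imports Main "HOL-Combinatorics.Cycles" "HOL-Library.FuncSet"
begin

text \<open>A rooted tree with arcs directed away from the root, together with a
  labelling of its leaves. Labels of non-leaf vertices are irrelevant.\<close>
record 'a ltree =
  verts :: "'a set"
  arcs  :: "('a \<times> 'a) set"
  root  :: 'a
  label :: "'a \<Rightarrow> nat"

definition children :: "'a ltree \<Rightarrow> 'a \<Rightarrow> 'a set" where
  "children T u = {v. (u, v) \<in> arcs T}"

definition leaves :: "'a ltree \<Rightarrow> 'a set" where
  "leaves T = {v \<in> verts T. children T v = {}}"

definition internal :: "'a ltree \<Rightarrow> 'a set" where
  "internal T = verts T - leaves T"

definition phylo_tree :: "nat \<Rightarrow> 'a ltree \<Rightarrow> bool" where
  "phylo_tree n T \<longleftrightarrow>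
     finite (verts T) \<and>
     arcs T \<subseteq> verts T \<times> verts T \<and>
     root T \<in> verts T \<and>
     (\<forall>v. (v, root T) \<notin> arcs T) \<and>
     (\<forall>v \<in> verts T - {root T}. \<exists>!u. (u, v) \<in> arcs T) \<and>
     (\<forall>v \<in> verts T. (root T, v) \<in> (arcs T)\<^sup>*) \<and>
     (\<forall>u \<in> verts T. card (children T u) \<noteq> 1) \<and>
     bij_betw (label T) (leaves T) {1..n}"

definition tree_iso :: "'a ltree \<Rightarrow> 'b ltree \<Rightarrow> bool" where
  "tree_iso T1 T2 \<longleftrightarrow>
     (\<exists>f. bij_betw f (verts T1) (verts T2) \<and>
          f (root T1) = root T2 \<and>
          (\<forall>u \<in> verts T1. \<forall>v \<in> verts T1. (u, v) \<in> arcs T1 \<longleftrightarrow> (f u, f v) \<in> arcs T2) \<and>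
          (\<forall>v \<in> leaves T1. label T2 (f v) = label T1 v))"

definition height :: "'a ltree \<Rightarrow> 'a \<Rightarrow> nat" where
  "height T v = Max {k. \<exists>w \<in> leaves T. (v, w) \<in> (arcs T) ^^ k}"

definition is_bottom_up :: "'a ltree \<Rightarrow> ('a \<Rightarrow> nat) \<Rightarrow> bool" where
  "is_bottom_up T l \<longleftrightarrow>
     inj_on l (verts T) \<and>
     l ` verts T \<subseteq> {1..card (verts T)} \<and>
     (\<forall>v \<in> leaves T. l v = label T v) \<and>
     (\<forall>u \<in> verts T. \<forall>v \<in> verts T. height T u < height T v \<longrightarrow> l u < l v) \<and>
     (\<forall>u \<in> verts T. \<forall>v \<in> verts T.
        0 < height T u \<and> height T u = height T v \<and>
        Min (l ` children T u) < Min (l ` children T v) \<longrightarrow> l u < l v)"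

text \<open>The bottom-up ordering (the unique such map on the vertex set; made
  canonical outside the vertex set via extensional).\<close>
definition bottom_up :: "'a ltree \<Rightarrow> 'a \<Rightarrow> nat" where
  "bottom_up T = (THE l. is_bottom_up T l \<and> l \<in> extensional (verts T))"

definition kappa :: "nat set \<Rightarrow> nat \<Rightarrow> nat" where
  "kappa S = cycle_of_list (sorted_list_of_set S)"

text \<open>Matching permutation: product over internal nodes u of kappa(l(children u)).\<close>
definition matching_perm :: "'a ltree \<Rightarrow> nat \<Rightarrow> nat" where
  "matching_perm T =
     (let l = bottom_up T in
      foldr (\<circ>)
        (map (\<lambda>k. kappa (l ` children T (inv_into (verts T) l k)))
             (sorted_list_of_set (l ` internal T)))
        id)"

end

theory Submission
  imports Defs
begin


locale ptree =
  fixes n :: nat and T :: "'a ltree"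
  assumes pt: "phylo_tree n T"
begin

abbreviation "V \<equiv> verts T"
abbreviation "R \<equiv> arcs T"
abbreviation "r \<equiv> root T"
abbreviation "ch \<equiv> children T"

lemma finV: "finite V" using pt unfolding phylo_tree_def by blast
lemma RV: "R \<subseteq> V \<times> V" using pt unfolding phylo_tree_def by blast
lemma rV: "r \<in> V" using pt unfolding phylo_tree_def by blast
lemma noparent: "(v, r) \<notin> R" using pt unfolding phylo_tree_def by blast
lemma uparent: "v \<in> V \<Longrightarrow> v \<noteq> r \<Longrightarrow> \<exists>!u. (u, v) \<in> R" using pt unfolding phylo_tree_def by blast
lemma reach: "v \<in> V \<Longrightarrow> (r, v) \<in> R\<^sup>*" using pt unfolding phylo_tree_def by blast
lemma deg: "u \<in> V \<Longrightarrow> card (ch u) \<noteq> 1" using pt unfolding phylo_tree_def by blast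
lemma lbij: "bij_betw (label T) (leaves T) {1..n}" using pt unfolding phylo_tree_def by blast

lemma arcV1: "(u, v) \<in> R \<Longrightarrow> u \<in> V" using RV by blast
lemma arcV2: "(u, v) \<in> R \<Longrightarrow> v \<in> V" using RV by blast
lemma ch_def': "v \<in> ch u \<longleftrightarrow> (u, v) \<in> R" by (simp add: children_def)
lemma ch_sub: "ch u \<subseteq> V" using RV by (auto simp: children_def)
lemma ch_fin: "finite (ch u)" using ch_sub finV finite_subset by blast

lemma par_unique: "(u, v) \<in> R \<Longrightarrow> (u', v) \<in> R \<Longrightarrow> u = u'"
proof -
  assume a: "(u, v) \<in> R" "(u', v) \<in> R"
  then have "v \<in> V" "v \<noteq> r" using arcV2 noparent by blast+
  then show ?thesis using uparent a by blast
qed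

lemma ch_disj: "u \<noteq> u' \<Longrightarrow> ch u \<inter> ch u' = {}"
  using par_unique by (auto simp: children_def)

lemma leaves_sub: "leaves T \<subseteq> V" by (auto simp: leaves_def)
lemma leaf_iff: "v \<in> leaves T \<longleftrightarrow> v \<in> V \<and> ch v = {}" by (simp add: leaves_def)

lemma path_unique: "(r, v) \<in> R ^^ k \<Longrightarrow> (r, v) \<in> R ^^ j \<Longrightarrow> k = j"
proof (induction k arbitrary: v j)
  case 0
  then have "v = r" by simp
  show ?case
  proof (cases j)
    case (Suc j')
    then show ?thesis using 0 \<open>v = r\<close> noparent by (auto elim: relpow_Suc_E)
  qed simp
next
  case (Suc k)
  from Suc.prems(1) obtain p where p: "(r, p) \<in> R ^^ k" "(p, v) \<in> R" by (auto elim: relpow_Suc_E)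
  show ?case
  proof (cases j)
    case 0
    then show ?thesis using Suc.prems p noparent by auto
  next
    case (Suc j')
    from Suc.prems(2) this obtain p' where p': "(r, p') \<in> R ^^ j'" "(p', v) \<in> R" by (auto elim: relpow_Suc_E)
    have "p = p'" using par_unique p p' by blast
    then show ?thesis using Suc.IH[OF p(1)] p' Suc by simp
  qed
qed

definition dep :: "'a \<Rightarrow> nat" where "dep v = (THE k. (r, v) \<in> R ^^ k)"

lemma dep_eq: "(r, v) \<in> R ^^ k \<Longrightarrow> dep v = k"
  unfolding dep_def using path_unique by blast

lemma dep_path: "v \<in> V \<Longrightarrow> (v, w) \<in> R ^^ k \<Longrightarrow> dep w = dep v + k"
proof -
  assume v: "v \<in> V" and p: "(v, w) \<in> R ^^ k"
  from reach[OF v] obtain m where m: "(r, v) \<in> R ^^ m" by (auto simp: rtrancl_power)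
  have "(r, w) \<in> R ^^ (m + k)" using m p by (auto simp: relpow_add)
  then show ?thesis using dep_eq m by simp
qed

lemma path_V: "v \<in> V \<Longrightarrow> (v, w) \<in> R ^^ k \<Longrightarrow> w \<in> V"
  by (cases k) (auto elim: relpow_Suc_E intro: arcV2)

lemma rtr_V: "v \<in> V \<Longrightarrow> (v, w) \<in> R\<^sup>* \<Longrightarrow> w \<in> V"
  using path_V by (auto simp: rtrancl_power)

definition D where "D = Max (dep ` V)"

lemma path_bound: "v \<in> V \<Longrightarrow> (v, w) \<in> R ^^ k \<Longrightarrow> k \<le> D"
proof -
  assume a: "v \<in> V" "(v, w) \<in> R ^^ k"
  have "w \<in> V" using path_V a by blast
  then have "dep w \<le> D" unfolding D_def using finV by simp
  then show ?thesis using dep_path[OF a] by simp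
qed

definition K where "K v = {k. \<exists>w\<in>leaves T. (v, w) \<in> R ^^ k}"

lemma K_fin: "v \<in> V \<Longrightarrow> finite (K v)"
proof -
  assume "v \<in> V"
  then have "K v \<subseteq> {..D}" using path_bound unfolding K_def by auto
  then show ?thesis using finite_subset by blast
qed

lemma leaf_desc: "v \<in> V \<Longrightarrow> \<exists>w\<in>leaves T. (v, w) \<in> R\<^sup>*"
proof -
  assume v: "v \<in> V"
  let ?S = "{w. (v, w) \<in> R\<^sup>*}"
  have S: "?S \<subseteq> V" using rtr_V v by blast
  then have fS: "finite ?S" using finV finite_subset by blast
  have ne: "v \<in> ?S" by simp
  obtain w where w: "w \<in> ?S" "dep w = Max (dep ` ?S)"
    using Max_in[of "dep ` ?S"] fS ne by (metis (no_types, lifting) empty_iff finite_imageI image_iff image_is_empty)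
  have "ch w = {}"
  proof (rule ccontr)
    assume "ch w \<noteq> {}"
    then obtain c where c: "(w, c) \<in> R" by (auto simp: children_def)
    have "c \<in> ?S" using w(1) c by simp
    then have "dep c \<le> dep w" using w(2) fS by simp
    moreover have "dep c = dep w + 1" using dep_path[of w c 1] c w(1) S by auto
    ultimately show False by simp
  qed
  then show ?thesis using w S by (auto simp: leaves_def)
qed

lemma K_ne: "v \<in> V \<Longrightarrow> K v \<noteq> {}"
proof -
  assume "v \<in> V"
  then obtain w where "w \<in> leaves T" "(v, w) \<in> R\<^sup>*" using leaf_desc by blast
  then obtain m where "(v, w) \<in> R ^^ m" using rtrancl_power by blast
  then have "m \<in> K v" using \<open>w \<in> leaves T\<close> unfolding K_def by blast
  then show ?thesis by blast
qed

lemma height_K: "height T v = Max (K v)" by (simp add: height_def K_def)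

lemma height_leaf: "v \<in> leaves T \<Longrightarrow> height T v = 0"
proof -
  assume v: "v \<in> leaves T"
  have "K v = {0}"
  proof
    show "K v \<subseteq> {0}"
    proof
      fix k assume "k \<in> K v"
      then obtain w where "(v, w) \<in> R ^^ k" unfolding K_def by blast
      then show "k \<in> {0}"
      proof (cases k)
        case (Suc k')
        have "(v, w) \<in> R ^^ Suc k'" using \<open>(v, w) \<in> R ^^ k\<close> unfolding Suc .
        then obtain y where "(v, y) \<in> R" by (rule relpow_Suc_E2)
        then show ?thesis using v by (auto simp: leaves_def children_def)
      qed simp
    qed
    show "{0} \<subseteq> K v" using v unfolding K_def by auto
  qed
  then show ?thesis by (simp add: height_K)
qed

lemma height_arc: "(u, c) \<in> R \<Longrightarrow> height T c < height T u"
proof -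
  assume a: "(u, c) \<in> R"
  have u: "u \<in> V" and c: "c \<in> V" using a arcV1 arcV2 by blast+
  have "Max (K c) \<in> K c" using K_fin[OF c] K_ne[OF c] by simp
  then obtain w where w: "w \<in> leaves T" "(c, w) \<in> R ^^ Max (K c)" unfolding K_def by blast
  have "(u, w) \<in> R ^^ Suc (Max (K c))" using relpow_Suc_I2[OF a w(2)] .
  then have "Suc (Max (K c)) \<in> K u" using w(1) unfolding K_def by blast
  then have "Suc (Max (K c)) \<le> Max (K u)" using K_fin[OF u] by simp
  then show ?thesis by (simp add: height_K)
qed

lemma height_int: "u \<in> V \<Longrightarrow> ch u \<noteq> {} \<Longrightarrow> \<exists>c\<in>ch u. height T u = Suc (height T c)"
proof -
  assume u: "u \<in> V" and ne: "ch u \<noteq> {}"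
  have m: "Max (K u) \<in> K u" using K_fin[OF u] K_ne[OF u] by simp
  then obtain w where w: "w \<in> leaves T" "(u, w) \<in> R ^^ Max (K u)" unfolding K_def by blast
  have "Max (K u) \<noteq> 0" using w ne u by (auto simp: leaves_def)
  then obtain j where j: "Max (K u) = Suc j" by (cases "Max (K u)") auto
  have "(u, w) \<in> R ^^ Suc j" using w(2) unfolding j .
  then obtain c where c: "(u, c) \<in> R" "(c, w) \<in> R ^^ j" by (rule relpow_Suc_E2)
  have cV: "c \<in> V" using c arcV2 by blast
  have "j \<in> K c" using c w unfolding K_def by blast
  then have "j \<le> height T c" using K_fin[OF cV] by (simp add: height_K)
  then have "height T u \<le> Suc (height T c)" using j by (simp add: height_K)
  moreover have "height T c < height T u" using height_arc c by blast
  ultimately show ?thesis using c by (auto simp: children_def)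
qed

lemma height_rec: "u \<in> V \<Longrightarrow> ch u \<noteq> {} \<Longrightarrow> height T u = Suc (Max (height T ` ch u))"
proof -
  assume u: "u \<in> V" and ne: "ch u \<noteq> {}"
  obtain c where c: "c \<in> ch u" "height T u = Suc (height T c)" using height_int[OF u ne] by blast
  have "Max (height T ` ch u) = height T c"
  proof (rule Max_eqI)
    show "finite (height T ` ch u)" using ch_fin by simp
    show "\<And>y. y \<in> height T ` ch u \<Longrightarrow> y \<le> height T c"
      using height_arc c(2) by (auto simp: children_def) (metis less_Suc_eq_le)
    show "height T c \<in> height T ` ch u" using c by simp
  qed
  then show ?thesis using c by simp
qed

lemma height0_iff: "v \<in> V \<Longrightarrow> height T v = 0 \<longleftrightarrow> v \<in> leaves T"
proof -
  assume v: "v \<in> V"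
  show ?thesis
  proof (cases "ch v = {}")
    case True
    then show ?thesis using v height_leaf by (auto simp: leaves_def)
  next
    case False
    then obtain c where "height T v = Suc (height T c)" using height_int v by blast
    then show ?thesis using False by (auto simp: leaves_def)
  qed
qed

lemma card_leaves: "card (leaves T) = n"
  using bij_betw_same_card[OF lbij] by simp

lemma int_iff: "u \<in> internal T \<longleftrightarrow> u \<in> V \<and> ch u \<noteq> {}"
  by (auto simp: internal_def leaves_def)

lemma int_card: "u \<in> internal T \<Longrightarrow> 2 \<le> card (ch u)"
proof -
  assume u: "u \<in> internal T"
  then have "ch u \<noteq> {}" "u \<in> V" using int_iff by auto
  then have "card (ch u) \<noteq> 0" "card (ch u) \<noteq> 1" using ch_fin deg by auto
  then show ?thesis by linarith
qed

lemma nonroot_union: "V - {r} = (\<Union>u\<in>internal T. ch u)"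
proof
  show "V - {r} \<subseteq> (\<Union>u\<in>internal T. ch u)"
  proof
    fix v assume v: "v \<in> V - {r}"
    then obtain u where u: "(u, v) \<in> R" using uparent by blast
    then have "u \<in> internal T" "v \<in> ch u" using arcV1 int_iff by (auto simp: children_def)
    then show "v \<in> (\<Union>u\<in>internal T. ch u)" by blast
  qed
  show "(\<Union>u\<in>internal T. ch u) \<subseteq> V - {r}"
    using ch_sub noparent by (auto simp: children_def)
qed

lemma fin_int: "finite (internal T)"
  using finV by (simp add: internal_def)

lemma card_int: "card V = n + card (internal T)"
proof -
  have "card (internal T) = card V - card (leaves T)"
    unfolding internal_def using leaves_sub finV by (simp add: card_Diff_subset finite_subset)
  moreover have "card (leaves T) \<le> card V" using leaves_sub finV card_mono by blast
  ultimately show ?thesis using card_leaves by simp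
qed

lemma cardV: "card V + 1 \<le> 2 * n"
proof -
  have "card (V - {r}) = (\<Sum>u\<in>internal T. card (ch u))"
    unfolding nonroot_union
    by (rule card_UN_disjoint) (use fin_int ch_fin ch_disj in auto)
  also have "\<dots> \<ge> (\<Sum>u\<in>internal T. 2)" using int_card by (intro sum_mono) auto
  finally have "card (V - {r}) \<ge> 2 * card (internal T)" by simp
  moreover have "card (V - {r}) = card V - 1" using rV finV by simp
  moreover have "card V \<ge> 1" using rV finV card_0_eq[of V] by fastforce
  ultimately show ?thesis using card_int by linarith
qed

end


fun Lf :: "nat \<Rightarrow> 'a ltree \<Rightarrow> nat \<Rightarrow> 'a \<Rightarrow> nat" where
  "Lf n T 0 v = label T v"
| "Lf n T (Suc h) v = (if height T v = Suc h then
     n + card {w \<in> verts T. 0 < height T w \<and> height T w \<le> h}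
       + card {w \<in> verts T. height T w = Suc h \<and>
                Min (Lf n T h ` children T w) < Min (Lf n T h ` children T v)} + 1
     else Lf n T h v)"

context ptree
begin

abbreviation "ht \<equiv> height T"

definition lab where "lab v = Lf n T (ht v) v"

lemma Lf_stable: "ht v \<le> h \<Longrightarrow> Lf n T h v = lab v"
proof (induction h)
  case 0
  then show ?case by (simp add: lab_def)
next
  case (Suc h)
  show ?case
  proof (cases "ht v = Suc h")
    case True
    then show ?thesis by (simp add: lab_def)
  next
    case False
    then show ?thesis using Suc by simp
  qed
qed

definition A where "A h = card {w \<in> V. 0 < ht w \<and> ht w \<le> h}"
definition W where "W k = {w \<in> V. ht w = k}"
definition M where "M w = Min (lab ` ch w)"
definition rho where "rho v = card {w \<in> W (ht v). M w < M v}"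

lemma ch_ht: "c \<in> ch w \<Longrightarrow> ht c < ht w"
  using height_arc by (simp add: children_def)

lemma lab_leaf: "v \<in> leaves T \<Longrightarrow> lab v = label T v"
  using height_leaf by (simp add: lab_def)

lemma lab_int: "v \<in> V \<Longrightarrow> ht v = Suc h \<Longrightarrow> lab v = n + A h + rho v + 1"
proof -
  assume v: "v \<in> V" and h: "ht v = Suc h"
  have eq: "Lf n T h ` ch w = lab ` ch w" if "ht w = Suc h" for w
    by (rule image_cong[OF refl]) (metis Lf_stable ch_ht less_Suc_eq_le that)
  have "{w \<in> V. ht w = Suc h \<and> Min (Lf n T h ` ch w) < Min (Lf n T h ` ch v)}
      = {w \<in> W (ht v). M w < M v}"
    using eq h by (auto simp: W_def M_def)
  then show ?thesis using h by (simp add: lab_def A_def rho_def)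
qed

lemma W_fin: "finite (W k)" using finV by (simp add: W_def)

lemma A_Suc: "A (Suc h) = A h + card (W (Suc h))"
proof -
  have "{w \<in> V. 0 < ht w \<and> ht w \<le> Suc h} = {w \<in> V. 0 < ht w \<and> ht w \<le> h} \<union> W (Suc h)"
    by (auto simp: W_def)
  moreover have "{w \<in> V. 0 < ht w \<and> ht w \<le> h} \<inter> W (Suc h) = {}" by (auto simp: W_def)
  ultimately show ?thesis unfolding A_def using finV W_fin
    by (simp add: card_Un_disjoint)
qed

lemma A_mono: "h \<le> h' \<Longrightarrow> A h \<le> A h'"
  unfolding A_def using finV by (intro card_mono) auto

lemma A_le: "A h \<le> card (internal T)"
  unfolding A_def using fin_int height0_iff by (intro card_mono) (auto simp: internal_def dest: height_leaf)

lemma rho_lt: "v \<in> V \<Longrightarrow> rho v < card (W (ht v))"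
proof -
  assume v: "v \<in> V"
  have "{w \<in> W (ht v). M w < M v} \<subseteq> W (ht v) - {v}" by auto
  then have "rho v \<le> card (W (ht v) - {v})" unfolding rho_def using W_fin by (intro card_mono) auto
  moreover have "v \<in> W (ht v)" using v by (simp add: W_def)
  ultimately show ?thesis using W_fin card_Diff1_less by (metis le_trans not_le)
qed

lemma rho_mono: "u \<in> V \<Longrightarrow> ht u = ht v \<Longrightarrow> M u < M v \<Longrightarrow> rho u < rho v"
proof -
  assume u: "u \<in> V" and e: "ht u = ht v" and m: "M u < M v"
  have "{w \<in> W (ht u). M w < M u} \<subset> {w \<in> W (ht v). M w < M v}"
  proof
    show "{w \<in> W (ht u). M w < M u} \<subseteq> {w \<in> W (ht v). M w < M v}" using e m by auto
    have "u \<in> {w \<in> W (ht v). M w < M v}" using u e m by (simp add: W_def)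
    then show "{w \<in> W (ht u). M w < M u} \<noteq> {w \<in> W (ht v). M w < M v}" by auto
  qed
  then show ?thesis unfolding rho_def using W_fin by (intro psubset_card_mono) auto
qed

lemma lab_int_bounds: "v \<in> V \<Longrightarrow> ht v = Suc h \<Longrightarrow> n + A h < lab v \<and> lab v \<le> n + A (Suc h)"
  using lab_int rho_lt A_Suc by fastforce

lemma label_leaf_range: "v \<in> leaves T \<Longrightarrow> label T v \<in> {1..n}"
  using lbij by (auto simp: bij_betw_def)

lemma lab_mono_ht: "u \<in> V \<Longrightarrow> v \<in> V \<Longrightarrow> ht u < ht v \<Longrightarrow> lab u < lab v"
proof -
  assume u: "u \<in> V" and v: "v \<in> V" and lt: "ht u < ht v"
  obtain h' where h': "ht v = Suc h'" using lt by (cases "ht v") auto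
  have lv: "n + A h' < lab v" using lab_int_bounds[OF v h'] by blast
  show ?thesis
  proof (cases "ht u")
    case 0
    then have "u \<in> leaves T" using height0_iff u by blast
    then have "lab u \<le> n" using lab_leaf label_leaf_range by fastforce
    then show ?thesis using lv by linarith
  next
    case (Suc h)
    then have "lab u \<le> n + A (Suc h)" using lab_int_bounds[OF u] by blast
    moreover have "A (Suc h) \<le> A h'" using A_mono Suc lt h' by simp
    ultimately show ?thesis using lv by linarith
  qed
qed

lemma lab_range: "v \<in> V \<Longrightarrow> lab v \<in> {1..card V}"
proof -
  assume v: "v \<in> V"
  show ?thesis
  proof (cases "ht v")
    case 0
    then have "v \<in> leaves T" using height0_iff v by blast
    then have "lab v \<in> {1..n}" using lab_leaf label_leaf_range by fastforce
    then show ?thesis using card_int by auto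
  next
    case (Suc h)
    then have "n + A h < lab v" "lab v \<le> n + A (Suc h)" using lab_int_bounds[OF v] by blast+
    then show ?thesis using A_le[of "Suc h"] card_int by auto
  qed
qed

lemma M_in: "w \<in> V \<Longrightarrow> ch w \<noteq> {} \<Longrightarrow> \<exists>c\<in>ch w. M w = lab c"
proof -
  assume "w \<in> V" "ch w \<noteq> {}"
  then have "Min (lab ` ch w) \<in> lab ` ch w" using ch_fin by (intro Min_in) auto
  then show ?thesis by (auto simp: M_def)
qed

lemma lab_inj_below: "\<forall>u\<in>V. \<forall>v\<in>V. ht u < k \<longrightarrow> ht v < k \<longrightarrow> lab u = lab v \<longrightarrow> u = v"
proof (induction k)
  case 0
  then show ?case by simp
next
  case (Suc k)
  show ?case
  proof (intro ballI impI)
    fix u v assume u: "u \<in> V" and v: "v \<in> V" and hu: "ht u < Suc k" and hv: "ht v < Suc k"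
      and eq: "lab u = lab v"
    have he: "ht u = ht v" using lab_mono_ht u v eq by (metis less_irrefl linorder_neqE_nat)
    show "u = v"
    proof (cases "ht u")
      case 0
      then have "u \<in> leaves T" "v \<in> leaves T" using height0_iff[OF u] height0_iff[OF v] he by auto
      then show ?thesis using eq lab_leaf lbij by (auto simp: bij_betw_def inj_on_def)
    next
      case (Suc h)
      then have nu: "ch u \<noteq> {}" "ch v \<noteq> {}" using height0_iff[OF u] height0_iff[OF v] u v he by (auto simp: leaves_def)
      have "rho u = rho v" using eq lab_int[OF u Suc] lab_int[OF v] Suc he by simp
      show ?thesis
      proof (rule ccontr)
        assume ne: "u \<noteq> v"
        have "M u \<noteq> M v"
        proof
          assume mm: "M u = M v"
          obtain cu where cu: "cu \<in> ch u" "M u = lab cu" using M_in u nu by blast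
          obtain cv where cv: "cv \<in> ch v" "M v = lab cv" using M_in v nu by blast
          have "ht cu < k" "ht cv < k" using ch_ht cu cv hu hv he by fastforce+
          moreover have "cu \<in> V" "cv \<in> V" using cu cv ch_sub by auto
          ultimately have "cu = cv" using Suc.IH mm cu cv by metis
          then show False using ch_disj ne cu cv by blast
        qed
        then have "M u < M v \<or> M v < M u" by linarith
        then have "rho u < rho v \<or> rho v < rho u" using rho_mono u v he by metis
        then show False using \<open>rho u = rho v\<close> by simp
      qed
    qed
  qed
qed

lemma lab_inj: "inj_on lab V"
  using lab_inj_below[of "Suc (Max (ht ` V))"] finV
  unfolding inj_on_def by (meson Max_ge finite_imageI image_eqI le_imp_less_Suc)

lemma lab_bu: "is_bottom_up T lab"
  unfolding is_bottom_up_def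
proof (intro conjI ballI impI)
  show "inj_on lab V" by (rule lab_inj)
  show "lab ` V \<subseteq> {1..card V}" using lab_range by blast
  show "\<And>v. v \<in> leaves T \<Longrightarrow> lab v = label T v" by (rule lab_leaf)
  show "\<And>u v. u \<in> V \<Longrightarrow> v \<in> V \<Longrightarrow> ht u < ht v \<Longrightarrow> lab u < lab v" by (rule lab_mono_ht)
  fix u v assume u: "u \<in> V" and v: "v \<in> V"
    and c: "0 < ht u \<and> ht u = ht v \<and> Min (lab ` ch u) < Min (lab ` ch v)"
  then obtain h where h: "ht u = Suc h" using gr0_implies_Suc by blast
  have "rho u < rho v" using rho_mono[OF u] c by (simp add: M_def)
  then show "lab u < lab v" using lab_int[OF u h] lab_int[OF v] h c by simp
qed

end


lemma Min_less_iff: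
  fixes f :: "'a \<Rightarrow> nat"
  assumes "finite X" "X \<noteq> {}" "finite Y" "Y \<noteq> {}"
  shows "Min (f ` X) < Min (f ` Y) \<longleftrightarrow> (\<exists>x\<in>X. \<forall>y\<in>Y. f x < f y)"
proof
  assume a: "Min (f ` X) < Min (f ` Y)"
  have "Min (f ` X) \<in> f ` X" using assms by simp
  then obtain x where x: "x \<in> X" "f x = Min (f ` X)" by (metis imageE)
  have "\<forall>y\<in>Y. f x < f y" using a x assms by (metis Min_le finite_imageI image_eqI order_less_le_trans)
  then show "\<exists>x\<in>X. \<forall>y\<in>Y. f x < f y" using x by blast
next
  assume "\<exists>x\<in>X. \<forall>y\<in>Y. f x < f y"
  then obtain x where x: "x \<in> X" "\<forall>y\<in>Y. f x < f y" by blast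
  have "Min (f ` Y) \<in> f ` Y" using assms by simp
  then obtain y where y: "y \<in> Y" "f y = Min (f ` Y)" by (metis imageE)
  have "Min (f ` X) \<le> f x" using x assms by simp
  then show "Min (f ` X) < Min (f ` Y)" using x y by force
qed

context ptree
begin

lemma bu_inj0: "is_bottom_up T l \<Longrightarrow> inj_on l V" by (simp add: is_bottom_up_def)

lemma bu_cong: "is_bottom_up T l \<Longrightarrow> (\<And>v. v \<in> V \<Longrightarrow> l v = l' v) \<Longrightarrow> is_bottom_up T l'"
proof -
  assume b: "is_bottom_up T l" and e: "\<And>v. v \<in> V \<Longrightarrow> l v = l' v"
  have ic: "l ` ch u = l' ` ch u" for u using e ch_sub by (intro image_cong) auto
  have iV: "l ` V = l' ` V" using e by (intro image_cong) auto
  have b1: "\<forall>u\<in>V. \<forall>v\<in>V. ht u < ht v \<longrightarrow> l u < l v" using b by (simp add: is_bottom_up_def)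
  have b2: "\<forall>u\<in>V. \<forall>v\<in>V. 0 < ht u \<and> ht u = ht v \<and> Min (l ` ch u) < Min (l ` ch v) \<longrightarrow> l u < l v"
    using b by (simp add: is_bottom_up_def)
  have b3: "\<forall>v\<in>leaves T. l v = label T v" using b by (simp add: is_bottom_up_def)
  show ?thesis
    unfolding is_bottom_up_def
  proof (intro conjI ballI impI)
    show "inj_on l' V" using bu_inj0[OF b] e inj_on_cong by blast
    show "l' ` V \<subseteq> {1..card V}" using b iV by (simp add: is_bottom_up_def)
    show "l' v = label T v" if "v \<in> leaves T" for v
    proof -
      have "v \<in> V" using that leaves_sub by blast
      then show ?thesis using b3 e[of v] that by simp
    qed
    show "l' u < l' v" if "u \<in> V" "v \<in> V" "ht u < ht v" for u v
    proof -
      have "l u < l v" using b1 that by blast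
      then show ?thesis using e that by simp
    qed
    show "l' u < l' v" if "u \<in> V" "v \<in> V" "0 < ht u \<and> ht u = ht v \<and> Min (l' ` ch u) < Min (l' ` ch v)" for u v
    proof -
      have "0 < ht u \<and> ht u = ht v \<and> Min (l ` ch u) < Min (l ` ch v)" using that(3) ic by simp
      then have "l u < l v" using b2 that(1,2) by blast
      then show ?thesis using e that by simp
    qed
  qed
qed

lemma bu_inj: "is_bottom_up T l \<Longrightarrow> inj_on l V" by (simp add: is_bottom_up_def)

lemma bu_img: "is_bottom_up T l \<Longrightarrow> l ` V = {1..card V}"
proof -
  assume b: "is_bottom_up T l"
  have "card (l ` V) = card {1..card V}" using bu_inj[OF b] by (simp add: card_image)
  then show ?thesis using b by (intro card_subset_eq) (auto simp: is_bottom_up_def)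
qed

lemma bu_rank: "is_bottom_up T l \<Longrightarrow> v \<in> V \<Longrightarrow> l v = card {u \<in> V. l u \<le> l v}"
proof -
  assume b: "is_bottom_up T l" and v: "v \<in> V"
  have "l ` {u \<in> V. l u \<le> l v} = {1..l v}"
  proof
    show "l ` {u \<in> V. l u \<le> l v} \<subseteq> {1..l v}" using bu_img[OF b] by auto
    show "{1..l v} \<subseteq> l ` {u \<in> V. l u \<le> l v}"
    proof
      fix x assume x: "x \<in> {1..l v}"
      have "l v \<le> card V" using bu_img[OF b] v by auto
      then have "x \<in> l ` V" using x bu_img[OF b] by auto
      then show "x \<in> l ` {u \<in> V. l u \<le> l v}" using x by auto
    qed
  qed
  moreover have "inj_on l {u \<in> V. l u \<le> l v}" using bu_inj[OF b] by (rule inj_on_subset) auto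
  ultimately show ?thesis using card_image by fastforce
qed

lemma bu_leaf: "is_bottom_up T l \<Longrightarrow> v \<in> leaves T \<Longrightarrow> l v = label T v"
  by (simp add: is_bottom_up_def)

lemma bu_ht: "is_bottom_up T l \<Longrightarrow> u \<in> V \<Longrightarrow> v \<in> V \<Longrightarrow> ht u < ht v \<Longrightarrow> l u < l v"
  by (simp add: is_bottom_up_def)

lemma bu_c: "is_bottom_up T l \<Longrightarrow> u \<in> V \<Longrightarrow> v \<in> V \<Longrightarrow> 0 < ht u \<Longrightarrow> ht u = ht v
  \<Longrightarrow> Min (l ` ch u) < Min (l ` ch v) \<Longrightarrow> l u < l v"
  unfolding is_bottom_up_def by blast

lemma int_ht: "u \<in> V \<Longrightarrow> 0 < ht u \<Longrightarrow> ch u \<noteq> {}"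
  using height0_iff[of u] by (auto simp: leaves_def)

lemma bu_M_ne: "is_bottom_up T l \<Longrightarrow> u \<in> V \<Longrightarrow> v \<in> V \<Longrightarrow> u \<noteq> v \<Longrightarrow> ch u \<noteq> {} \<Longrightarrow> ch v \<noteq> {}
  \<Longrightarrow> Min (l ` ch u) \<noteq> Min (l ` ch v)"
proof
  assume b: "is_bottom_up T l" and u: "u \<in> V" and v: "v \<in> V" and ne: "u \<noteq> v"
    and cu: "ch u \<noteq> {}" and cv: "ch v \<noteq> {}" and eq: "Min (l ` ch u) = Min (l ` ch v)"
  have "Min (l ` ch u) \<in> l ` ch u" using ch_fin cu by simp
  then obtain x where x: "x \<in> ch u" "l x = Min (l ` ch u)" by (metis imageE)
  have "Min (l ` ch v) \<in> l ` ch v" using ch_fin cv by simp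
  then obtain y where y: "y \<in> ch v" "l y = Min (l ` ch v)" by (metis imageE)
  have "x \<in> V" "y \<in> V" using x y ch_sub by auto
  moreover have "l x = l y" using x y eq by simp
  ultimately have "x = y" using bu_inj[OF b] by (simp add: inj_on_def)
  then show False using ch_disj[OF ne] x y by blast
qed

lemma bu_lt_iff: "is_bottom_up T l \<Longrightarrow> u \<in> V \<Longrightarrow> v \<in> V \<Longrightarrow> u \<noteq> v \<Longrightarrow> ht u = ht v \<Longrightarrow> 0 < ht u
  \<Longrightarrow> (l u < l v \<longleftrightarrow> Min (l ` ch u) < Min (l ` ch v))"
proof -
  assume b: "is_bottom_up T l" and u: "u \<in> V" and v: "v \<in> V" and ne: "u \<noteq> v"
    and e: "ht u = ht v" and p: "0 < ht u"
  have p': "0 < ht v" using e p by simp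
  have cu: "ch u \<noteq> {}" using int_ht[OF u p] .
  have cv: "ch v \<noteq> {}" using int_ht[OF v p'] .
  have mne: "Min (l ` ch u) \<noteq> Min (l ` ch v)" using bu_M_ne[OF b u v ne cu cv] .
  show ?thesis
  proof
    assume lt: "l u < l v"
    show "Min (l ` ch u) < Min (l ` ch v)"
    proof (rule ccontr)
      assume "\<not> Min (l ` ch u) < Min (l ` ch v)"
      then have "Min (l ` ch v) < Min (l ` ch u)" using mne by (meson linorder_neqE_nat)
      then have "l v < l u" using bu_c[OF b v u p' e[symmetric]] by blast
      then show False using lt by simp
    qed
  next
    assume "Min (l ` ch u) < Min (l ` ch v)"
    then show "l u < l v" using bu_c[OF b u v p e] by blast
  qed
qed

lemma bu_order: "is_bottom_up T l \<Longrightarrow> is_bottom_up T l' \<Longrightarrow>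
  \<forall>u\<in>V. \<forall>v\<in>V. ht u \<le> k \<longrightarrow> ht v \<le> k \<longrightarrow> (l u < l v \<longleftrightarrow> l' u < l' v)"
proof (induction k)
  case 0
  show ?case
  proof (intro ballI impI)
    fix u v assume u: "u \<in> V" and v: "v \<in> V" and "ht u \<le> 0" "ht v \<le> 0"
    then have "u \<in> leaves T" "v \<in> leaves T" using height0_iff by auto
    then show "l u < l v \<longleftrightarrow> l' u < l' v" using bu_leaf[OF 0(1)] bu_leaf[OF 0(2)] by simp
  qed
next
  case (Suc k)
  have b: "is_bottom_up T l" and b': "is_bottom_up T l'" by fact+
  show ?case
  proof (intro ballI impI)
    fix u v assume u: "u \<in> V" and v: "v \<in> V" and hu: "ht u \<le> Suc k" and hv: "ht v \<le> Suc k"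
    show "l u < l v \<longleftrightarrow> l' u < l' v"
    proof (cases "ht u = ht v")
      case False
      then have "ht u < ht v \<or> ht v < ht u" by linarith
      then show ?thesis using bu_ht[OF b u v] bu_ht[OF b v u] bu_ht[OF b' u v] bu_ht[OF b' v u] by auto
    next
      case True
      show ?thesis
      proof (cases "ht u = 0")
        case True
        then have "u \<in> leaves T" "v \<in> leaves T" using height0_iff[OF u] height0_iff[OF v] \<open>ht u = ht v\<close> by auto
        then show ?thesis using bu_leaf[OF b] bu_leaf[OF b'] by simp
      next
        case False
        show ?thesis
        proof (cases "u = v")
          case True then show ?thesis by simp
        next
          case ne: False
          have cu: "ch u \<noteq> {}" and cv: "ch v \<noteq> {}" using int_ht u v \<open>ht u = ht v\<close> False by auto
          have IH: "\<forall>x\<in>ch u. \<forall>y\<in>ch v. (l x < l y \<longleftrightarrow> l' x < l' y)"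
          proof (intro ballI)
            fix x y assume x: "x \<in> ch u" and y: "y \<in> ch v"
            have "ht x \<le> k" "ht y \<le> k" using ch_ht x y hu hv by fastforce+
            moreover have "x \<in> V" "y \<in> V" using x y ch_sub by auto
            ultimately show "l x < l y \<longleftrightarrow> l' x < l' y" using Suc.IH[OF b b'] by blast
          qed
          have "l u < l v \<longleftrightarrow> Min (l ` ch u) < Min (l ` ch v)"
            using bu_lt_iff[OF b u v ne \<open>ht u = ht v\<close>] False by simp
          also have "\<dots> \<longleftrightarrow> (\<exists>x\<in>ch u. \<forall>y\<in>ch v. l x < l y)"
            using Min_less_iff ch_fin cu cv by blast
          also have "\<dots> \<longleftrightarrow> (\<exists>x\<in>ch u. \<forall>y\<in>ch v. l' x < l' y)" using IH by blast
          also have "\<dots> \<longleftrightarrow> Min (l' ` ch u) < Min (l' ` ch v)"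
            using Min_less_iff ch_fin cu cv by blast
          also have "\<dots> \<longleftrightarrow> l' u < l' v"
            using bu_lt_iff[OF b' u v ne \<open>ht u = ht v\<close>] False by simp
          finally show ?thesis .
        qed
      qed
    qed
  qed
qed

lemma bu_unique: "is_bottom_up T l \<Longrightarrow> is_bottom_up T l' \<Longrightarrow> v \<in> V \<Longrightarrow> l v = l' v"
proof -
  assume b: "is_bottom_up T l" and b': "is_bottom_up T l'" and v: "v \<in> V"
  let ?k = "Max (ht ` V)"
  have hk: "ht u \<le> ?k" if "u \<in> V" for u using that finV by simp
  have o: "\<forall>u\<in>V. \<forall>w\<in>V. ht u \<le> ?k \<longrightarrow> ht w \<le> ?k \<longrightarrow> (l u < l w \<longleftrightarrow> l' u < l' w)"
    by (rule bu_order[OF b b'])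
  have "l u \<le> l v \<longleftrightarrow> l' u \<le> l' v" if u: "u \<in> V" for u
  proof -
    have "l v < l u \<longleftrightarrow> l' v < l' u" using o u v hk by blast
    then show ?thesis by linarith
  qed
  then have "{u \<in> V. l u \<le> l v} = {u \<in> V. l' u \<le> l' v}" by blast
  then show ?thesis using bu_rank[OF b v] bu_rank[OF b' v] by simp
qed

lemma bottom_up_bu: "is_bottom_up T (bottom_up T)"
proof -
  have "\<exists>!l. is_bottom_up T l \<and> l \<in> extensional V"
  proof
    show "is_bottom_up T (restrict lab V) \<and> restrict lab V \<in> extensional V"
      using bu_cong[OF lab_bu] by simp
    fix l assume "is_bottom_up T l \<and> l \<in> extensional V"
    then show "l = restrict lab V"
      using bu_unique[OF _ lab_bu] by (intro extensionalityI[of _ V]) auto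
  qed
  then show ?thesis unfolding bottom_up_def by (metis (mono_tags, lifting) theI')
qed

end


lemma kappa_out: "finite S \<Longrightarrow> x \<notin> S \<Longrightarrow> kappa S x = x"
  unfolding kappa_def by (rule id_outside_supp) simp

lemma kappa_in: "finite S \<Longrightarrow> x \<in> S \<Longrightarrow> kappa S x \<in> S"
proof -
  assume f: "finite S" and x: "x \<in> S"
  have "kappa S permutes set (sorted_list_of_set S)" unfolding kappa_def by (rule cycle_permutes)
  then have "kappa S permutes S" using f by simp
  then show ?thesis using x by (simp add: permutes_in_image)
qed

lemma kappa_orbit: "finite S \<Longrightarrow> x \<in> S \<Longrightarrow> y \<in> S \<Longrightarrow> \<exists>j. (kappa S ^^ j) x = y"
proof -
  assume f: "finite S" and x: "x \<in> S" and y: "y \<in> S"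
  define cs where "cs = sorted_list_of_set S"
  have d: "distinct cs" and sc: "set cs = S" using f by (auto simp: cs_def)
  obtain i where i: "i < length cs" "cs ! i = x" using x sc by (metis in_set_conv_nth)
  obtain k where k: "k < length cs" "cs ! k = y" using y sc by (metis in_set_conv_nth)
  define j where "j = k + length cs - i"
  have "map (cycle_of_list cs ^^ j) cs = rotate j cs" using cyclic_rotation[OF d] .
  then have "(cycle_of_list cs ^^ j) (cs ! i) = rotate j cs ! i" using i
    by (metis nth_map)
  also have "\<dots> = cs ! ((j + i) mod length cs)" using i by (simp add: nth_rotate)
  also have "(j + i) mod length cs = k" using i k by (simp add: j_def)
  finally show ?thesis using i k by (auto simp: kappa_def cs_def)
qed

lemma foldr_kappa:
  assumes "distinct ks" "\<forall>k\<in>set ks. finite (S k)" "\<forall>a\<in>set ks. \<forall>b\<in>set ks. a \<noteq> b \<longrightarrow> S a \<inter> S b = {}"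
  shows "(x \<notin> \<Union>(S ` set ks) \<longrightarrow> foldr (\<circ>) (map (\<lambda>k. kappa (S k)) ks) id x = x) \<and>
         (\<forall>k\<in>set ks. x \<in> S k \<longrightarrow> foldr (\<circ>) (map (\<lambda>k. kappa (S k)) ks) id x = kappa (S k) x)"
  using assms
proof (induction ks arbitrary: x)
  case Nil
  then show ?case by simp
next
  case (Cons a ks)
  let ?F = "foldr (\<circ>) (map (\<lambda>k. kappa (S k)) ks) id"
  have d: "distinct ks" using Cons.prems(1) by simp
  have fk: "\<forall>k\<in>set ks. finite (S k)" using Cons.prems(2) by simp
  have dj: "\<forall>a\<in>set ks. \<forall>b\<in>set ks. a \<noteq> b \<longrightarrow> S a \<inter> S b = {}" using Cons.prems(3) by simp
  have IH: "(y \<notin> \<Union>(S ` set ks) \<longrightarrow> ?F y = y) \<and> (\<forall>k\<in>set ks. y \<in> S k \<longrightarrow> ?F y = kappa (S k) y)" for y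
    using Cons.IH[OF d fk dj] .
  have fa: "finite (S a)" using Cons.prems by simp
  have eq: "foldr (\<circ>) (map (\<lambda>k. kappa (S k)) (a # ks)) id x = kappa (S a) (?F x)" by simp
  show ?case
  proof (intro conjI impI ballI)
    assume "x \<notin> \<Union>(S ` set (a # ks))"
    then show "foldr (\<circ>) (map (\<lambda>k. kappa (S k)) (a # ks)) id x = x"
      using IH[of x] kappa_out[OF fa] eq by simp
  next
    fix k assume k: "k \<in> set (a # ks)" and xk: "x \<in> S k"
    show "foldr (\<circ>) (map (\<lambda>k. kappa (S k)) (a # ks)) id x = kappa (S k) x"
    proof (cases "k = a")
      case True
      have "x \<notin> \<Union>(S ` set ks)"
      proof
        assume "x \<in> \<Union>(S ` set ks)"
        then obtain b where "b \<in> set ks" "x \<in> S b" by blast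
        moreover then have "b \<noteq> a" using Cons.prems(1) by auto
        ultimately show False using Cons.prems(3) xk True by auto
      qed
      then show ?thesis using IH[of x] eq True by simp
    next
      case False
      then have k': "k \<in> set ks" using k by simp
      have fk: "finite (S k)" using Cons.prems k by blast
      have "?F x = kappa (S k) x" using IH[of x] k' xk by blast
      moreover have "kappa (S k) x \<in> S k" using kappa_in[OF fk xk] .
      moreover have "S a \<inter> S k = {}" using Cons.prems(3) k False by auto
      ultimately show ?thesis using eq kappa_out[OF fa] by auto
    qed
  qed
qed

definition orb :: "(nat \<Rightarrow> nat) \<Rightarrow> nat \<Rightarrow> nat set" where
  "orb p x = {y. \<exists>j. (p ^^ j) x = y}"

lemma orb_kappa: "finite S \<Longrightarrow> x \<in> S \<Longrightarrow> (\<forall>y\<in>S. p y = kappa S y) \<Longrightarrow> orb p x = S"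
proof -
  assume f: "finite S" and x: "x \<in> S" and a: "\<forall>y\<in>S. p y = kappa S y"
  have pw: "(p ^^ j) x = (kappa S ^^ j) x \<and> (p ^^ j) x \<in> S" for j
  proof (induction j)
    case 0 then show ?case using x by simp
  next
    case (Suc j)
    then have e: "(p ^^ j) x = (kappa S ^^ j) x" and m: "(kappa S ^^ j) x \<in> S" by auto
    then show ?case using a kappa_in[OF f m] by simp
  qed
  show ?thesis
  proof
    show "orb p x \<subseteq> S"
    proof
      fix y assume "y \<in> orb p x"
      then obtain j where jy: "(p ^^ j) x = y" unfolding orb_def by blast
      have "(p ^^ j) x \<in> S" using pw[of j] by (rule conjunct2)
      then show "y \<in> S" unfolding jy .
    qed
    show "S \<subseteq> orb p x"
    proof
      fix y assume "y \<in> S"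
      then obtain j where j: "(kappa S ^^ j) x = y" using kappa_orbit[OF f x] by blast
      have "(p ^^ j) x = (kappa S ^^ j) x" using pw[of j] by (rule conjunct1)
      then have "(p ^^ j) x = y" using j by simp
      then show "y \<in> orb p x" unfolding orb_def by blast
    qed
  qed
qed

lemma orb_fix: "p x = x \<Longrightarrow> orb p x = {x}"
proof -
  assume a: "p x = x"
  have "(p ^^ j) x = x" for j by (induction j) (use a in auto)
  then show ?thesis unfolding orb_def by auto
qed

context ptree
begin

abbreviation "bl \<equiv> bottom_up T"
abbreviation "NN \<equiv> card V"

lemma bl_bu: "is_bottom_up T bl" by (rule bottom_up_bu)
lemma bl_inj: "inj_on bl V" using bu_inj[OF bl_bu] .
lemma bl_img: "bl ` V = {1..NN}" using bu_img[OF bl_bu] .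

lemma bl_leaf_img: "bl ` leaves T = {1..n}"
proof -
  have "bl ` leaves T = label T ` leaves T" using bu_leaf[OF bl_bu] by (intro image_cong) auto
  then show ?thesis using bij_betw_imp_surj_on[OF lbij] by simp
qed

lemma n_le: "n \<le> NN" using card_int by simp

lemma bl_int_img: "bl ` internal T = {n<..NN}"
proof -
  have "bl ` internal T = bl ` V - bl ` leaves T"
    unfolding internal_def using bl_inj leaves_sub by (intro inj_on_image_set_diff) auto
  then show ?thesis using bl_img bl_leaf_img by auto
qed

definition Cl where "Cl k = bl ` ch (inv_into V bl k)"
definition Hl where "Hl k = ht (inv_into V bl k)"

lemma Cl_eq: "u \<in> V \<Longrightarrow> Cl (bl u) = bl ` ch u"
  using bl_inj by (simp add: Cl_def)
lemma Hl_eq: "u \<in> V \<Longrightarrow> Hl (bl u) = ht u"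
  using bl_inj by (simp add: Hl_def)

lemma vert_of: "k \<in> {1..NN} \<Longrightarrow> \<exists>u\<in>V. bl u = k"
  using bl_img by (metis imageE)

lemma leaf_lab: "u \<in> V \<Longrightarrow> bl u \<le> n \<longleftrightarrow> u \<in> leaves T"
proof -
  assume u: "u \<in> V"
  show ?thesis
  proof
    assume "bl u \<le> n"
    moreover have "bl u \<ge> 1" using bl_img u by auto
    ultimately have "bl u \<in> bl ` leaves T" using bl_leaf_img by auto
    then obtain w where w: "w \<in> leaves T" "bl u = bl w" by auto
    then have "w \<in> V" using leaves_sub by blast
    then have "u = w" using inj_onD[OF bl_inj w(2) u] by simp
    then show "u \<in> leaves T" using w by simp
  next
    assume "u \<in> leaves T"
    then show "bl u \<le> n" using bl_leaf_img by auto
  qed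
qed

lemma Cl_empty: "k \<in> {1..NN} \<Longrightarrow> Cl k = {} \<longleftrightarrow> k \<le> n"
proof -
  assume "k \<in> {1..NN}"
  then obtain u where u: "u \<in> V" "bl u = k" using vert_of by blast
  then show ?thesis using Cl_eq[OF u(1)] leaf_lab[OF u(1)] by (auto simp: leaves_def)
qed

lemma Cl_sub: "k \<in> {1..NN} \<Longrightarrow> Cl k \<subseteq> {1..<k}"
proof -
  assume "k \<in> {1..NN}"
  then obtain u where u: "u \<in> V" "bl u = k" using vert_of by blast
  show ?thesis
  proof
    fix x assume "x \<in> Cl k"
    then obtain c where c: "c \<in> ch u" "x = bl c" using Cl_eq[OF u(1)] u(2) by auto
    have cV: "c \<in> V" using c ch_sub by auto
    have "bl c < bl u" using bu_ht[OF bl_bu cV u(1)] ch_ht c by blast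
    moreover have "bl c \<ge> 1" using bl_img cV by auto
    ultimately show "x \<in> {1..<k}" using c u by auto
  qed
qed

lemma Cl_fin: "finite (Cl k)" using ch_fin by (simp add: Cl_def)

lemma Hl_leaf: "k \<in> {1..n} \<Longrightarrow> Hl k = 0"
proof -
  assume "k \<in> {1..n}"
  then obtain u where "u \<in> leaves T" "bl u = k" using bl_leaf_img by (metis imageE)
  then show ?thesis using Hl_eq leaves_sub height_leaf by auto
qed

lemma int_of: "k \<in> {n<..NN} \<Longrightarrow> \<exists>u\<in>internal T. bl u = k"
  using bl_int_img by (metis imageE)

lemma Hl_rec: "k \<in> {n<..NN} \<Longrightarrow> Hl k = Suc (Max (Hl ` Cl k))"
proof -
  assume "k \<in> {n<..NN}"
  then obtain u where u: "u \<in> internal T" "bl u = k" using int_of by blast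
  have uV: "u \<in> V" and cu: "ch u \<noteq> {}" using u int_iff by auto
  have "Hl ` Cl k = Hl ` bl ` ch u" using Cl_eq[OF uV] u(2) by simp
  also have "\<dots> = ht ` ch u" unfolding image_image using Hl_eq ch_sub by (intro image_cong) auto
  finally have "Hl ` Cl k = ht ` ch u" .
  then show ?thesis using height_rec[OF uV cu] Hl_eq[OF uV] u(2) by simp
qed

lemma M1: "a \<in> {n<..NN} \<Longrightarrow> b \<in> {n<..NN} \<Longrightarrow> Hl a < Hl b \<Longrightarrow> a < b"
proof -
  assume a: "a \<in> {n<..NN}" and b: "b \<in> {n<..NN}" and h: "Hl a < Hl b"
  obtain u where u: "u \<in> internal T" "bl u = a" using int_of a by blast
  obtain v where v: "v \<in> internal T" "bl v = b" using int_of b by blast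
  have "u \<in> V" "v \<in> V" using u v by (auto simp: internal_def)
  then show ?thesis using bu_ht[OF bl_bu] h Hl_eq u v by auto
qed

lemma M2: "a \<in> {n<..NN} \<Longrightarrow> b \<in> {n<..NN} \<Longrightarrow> Hl a = Hl b \<Longrightarrow> Min (Cl a) < Min (Cl b) \<Longrightarrow> a < b"
proof -
  assume a: "a \<in> {n<..NN}" and b: "b \<in> {n<..NN}" and h: "Hl a = Hl b" and m: "Min (Cl a) < Min (Cl b)"
  obtain u where u: "u \<in> internal T" "bl u = a" using int_of a by blast
  obtain v where v: "v \<in> internal T" "bl v = b" using int_of b by blast
  have uV: "u \<in> V" and vV: "v \<in> V" using u v by (auto simp: internal_def)
  have "0 < ht u" using u height0_iff[OF uV] by (auto simp: internal_def)
  moreover have "ht u = ht v" using h Hl_eq uV vV u v by auto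
  moreover have "Min (bl ` ch u) < Min (bl ` ch v)" using m Cl_eq uV vV u v by auto
  ultimately have "bl u < bl v" using bu_c[OF bl_bu uV vV] by blast
  then show ?thesis using u v by simp
qed

lemma Disj: "a \<in> {1..NN} \<Longrightarrow> b \<in> {1..NN} \<Longrightarrow> a \<noteq> b \<Longrightarrow> Cl a \<inter> Cl b = {}"
proof -
  assume a: "a \<in> {1..NN}" and b: "b \<in> {1..NN}" and ne: "a \<noteq> b"
  obtain u where u: "u \<in> V" "bl u = a" using vert_of a by blast
  obtain v where v: "v \<in> V" "bl v = b" using vert_of b by blast
  have "u \<noteq> v" using u v ne by auto
  then have d: "ch u \<inter> ch v = {}" by (rule ch_disj)
  have "bl ` ch u \<inter> bl ` ch v = bl ` (ch u \<inter> ch v)"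
    using bl_inj ch_sub by (intro inj_on_image_Int[symmetric]) auto
  then show ?thesis using d Cl_eq[OF u(1)] Cl_eq[OF v(1)] u(2) v(2) by simp
qed

lemma Ccard: "k \<in> {n<..NN} \<Longrightarrow> 2 \<le> card (Cl k)"
proof -
  assume "k \<in> {n<..NN}"
  then obtain u where u: "u \<in> internal T" "bl u = k" using int_of by blast
  have uV: "u \<in> V" using u by (auto simp: internal_def)
  have "card (bl ` ch u) = card (ch u)" by (rule card_image[OF inj_on_subset[OF bl_inj ch_sub]])
  then have "card (Cl k) = card (ch u)" using Cl_eq[OF uV] u(2) by simp
  then show ?thesis using int_card[OF u(1)] by simp
qed

lemma mp_eq: "matching_perm T = foldr (\<circ>) (map (\<lambda>k. kappa (Cl k)) (sorted_list_of_set {n<..NN})) id"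
  unfolding matching_perm_def Let_def bl_int_img Cl_def ..

lemma mp_in: "k \<in> {n<..NN} \<Longrightarrow> x \<in> Cl k \<Longrightarrow> matching_perm T x = kappa (Cl k) x"
proof -
  assume k: "k \<in> {n<..NN}" and x: "x \<in> Cl k"
  have "\<forall>a\<in>set (sorted_list_of_set {n<..NN}). \<forall>b\<in>set (sorted_list_of_set {n<..NN}). a \<noteq> b \<longrightarrow> Cl a \<inter> Cl b = {}"
    using Disj by auto
  then show ?thesis unfolding mp_eq using foldr_kappa[of "sorted_list_of_set {n<..NN}" Cl x] Cl_fin k x by auto
qed

lemma mp_out: "x \<notin> \<Union>(Cl ` {n<..NN}) \<Longrightarrow> matching_perm T x = x"
proof -
  assume x: "x \<notin> \<Union>(Cl ` {n<..NN})"
  have "\<forall>a\<in>set (sorted_list_of_set {n<..NN}). \<forall>b\<in>set (sorted_list_of_set {n<..NN}). a \<noteq> b \<longrightarrow> Cl a \<inter> Cl b = {}"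
    using Disj by auto
  then show ?thesis unfolding mp_eq using foldr_kappa[of "sorted_list_of_set {n<..NN}" Cl x] Cl_fin x by auto
qed

lemma blocks_range: "\<Union>(Cl ` {n<..NN}) \<subseteq> {1..2 * n - 2}"
proof
  fix x assume "x \<in> \<Union>(Cl ` {n<..NN})"
  then obtain k where k: "k \<in> {n<..NN}" "x \<in> Cl k" by blast
  then have "k \<in> {1..NN}" by auto
  then have "Cl k \<subseteq> {1..<k}" by (rule Cl_sub)
  then have "x \<in> {1..<k}" using k by blast
  then show "x \<in> {1..2 * n - 2}" using k cardV by auto
qed

lemma orb_block: "k \<in> {n<..NN} \<Longrightarrow> x \<in> Cl k \<Longrightarrow> orb (matching_perm T) x = Cl k"
  using orb_kappa[OF Cl_fin] mp_in by blast

end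


lemma recon:
  fixes CA CB :: "nat \<Rightarrow> nat set" and HA HB :: "nat \<Rightarrow> nat" and n N :: nat
  assumes e1: "\<And>k. k \<in> {1..N} \<Longrightarrow> CA k = {} \<longleftrightarrow> k \<le> n"
    and e2: "\<And>k. k \<in> {1..N} \<Longrightarrow> CB k = {} \<longleftrightarrow> k \<le> n"
    and s1: "\<And>k. k \<in> {1..N} \<Longrightarrow> CA k \<subseteq> {1..<k}"
    and s2: "\<And>k. k \<in> {1..N} \<Longrightarrow> CB k \<subseteq> {1..<k}"
    and h1l: "\<And>k. k \<in> {1..n} \<Longrightarrow> HA k = 0"
    and h2l: "\<And>k. k \<in> {1..n} \<Longrightarrow> HB k = 0"
    and h1r: "\<And>k. k \<in> {n<..N} \<Longrightarrow> HA k = Suc (Max (HA ` CA k))"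
    and h2r: "\<And>k. k \<in> {n<..N} \<Longrightarrow> HB k = Suc (Max (HB ` CB k))"
    and m1a: "\<And>a b. a \<in> {n<..N} \<Longrightarrow> b \<in> {n<..N} \<Longrightarrow> HA a < HA b \<Longrightarrow> a < b"
    and m2a: "\<And>a b. a \<in> {n<..N} \<Longrightarrow> b \<in> {n<..N} \<Longrightarrow> HB a < HB b \<Longrightarrow> a < b"
    and m1b: "\<And>a b. a \<in> {n<..N} \<Longrightarrow> b \<in> {n<..N} \<Longrightarrow> HA a = HA b \<Longrightarrow> Min (CA a) < Min (CA b) \<Longrightarrow> a < b"
    and m2b: "\<And>a b. a \<in> {n<..N} \<Longrightarrow> b \<in> {n<..N} \<Longrightarrow> HB a = HB b \<Longrightarrow> Min (CB a) < Min (CB b) \<Longrightarrow> a < b"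
    and d1: "\<And>a b. a \<in> {1..N} \<Longrightarrow> b \<in> {1..N} \<Longrightarrow> a \<noteq> b \<Longrightarrow> CA a \<inter> CA b = {}"
    and d2: "\<And>a b. a \<in> {1..N} \<Longrightarrow> b \<in> {1..N} \<Longrightarrow> a \<noteq> b \<Longrightarrow> CB a \<inter> CB b = {}"
    and B: "CA ` {n<..N} = CB ` {n<..N}"
  shows "k \<in> {1..N} \<Longrightarrow> CA k = CB k"
proof (induction k rule: less_induct)
  case (less k)
  have IH: "\<And>j. j < k \<Longrightarrow> j \<in> {1..N} \<Longrightarrow> CA j = CB j" using less.IH by blast
  have Hag: "HA j = HB j" if "j < k" "j \<in> {1..N}" for j
    using that
  proof (induction j rule: less_induct)
    case (less j)
    show ?case
    proof (cases "j \<le> n")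
      case True
      then have "j \<in> {1..n}" using less.prems by auto
      then show ?thesis using h1l h2l by simp
    next
      case False
      then have jN: "j \<in> {n<..N}" using less.prems by auto
      have Ce: "CA j = CB j" using IH less.prems by blast
      have "HA ` CA j = HB ` CA j"
      proof (rule image_cong[OF refl])
        fix x assume x: "x \<in> CA j"
        have "CA j \<subseteq> {1..<j}" using s1 less.prems(2) by blast
        then have "x \<in> {1..<j}" using x by blast
        then have "x < j" "x < k" "x \<in> {1..N}" using less.prems by auto
        then show "HA x = HB x" using less.IH by blast
      qed
      then show ?thesis using h1r[OF jN] h2r[OF jN] Ce by simp
    qed
  qed
  show "CA k = CB k"
  proof (cases "k \<le> n")
    case True
    then show ?thesis using e1 e2 less.prems by auto
  next
    case False
    then have kN: "k \<in> {n<..N}" using less.prems by auto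
    have ne1: "CA a \<noteq> {}" if "a \<in> {n<..N}" for a using e1[of a] that by auto
    have ne2: "CB a \<noteq> {}" if "a \<in> {n<..N}" for a using e2[of a] that by auto
    have inj1: "a = b" if "a \<in> {n<..N}" "b \<in> {n<..N}" "CA a = CA b" for a b
    proof (rule ccontr)
      assume "a \<noteq> b"
      moreover have "a \<in> {1..N}" "b \<in> {1..N}" using that by auto
      ultimately have "CA a \<inter> CA b = {}" using d1 by blast
      then show False using ne1[OF that(1)] that(3) by auto
    qed
    have inj2: "a = b" if "a \<in> {n<..N}" "b \<in> {n<..N}" "CB a = CB b" for a b
    proof (rule ccontr)
      assume "a \<noteq> b"
      moreover have "a \<in> {1..N}" "b \<in> {1..N}" using that by auto
      ultimately have "CB a \<inter> CB b = {}" using d2 by blast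
      then show False using ne2[OF that(1)] that(3) by auto
    qed
    have "CA k \<in> CB ` {n<..N}" using B kN by blast
    then obtain k2 where k2: "k2 \<in> {n<..N}" "CB k2 = CA k" by blast
    have "CB k \<in> CA ` {n<..N}" using B kN by blast
    then obtain k1 where k1: "k1 \<in> {n<..N}" "CA k1 = CB k" by blast
    show ?thesis
    proof (rule ccontr)
      assume ne: "CA k \<noteq> CB k"
      have "k < k2"
      proof -
        have "\<not> k2 < k"
        proof
          assume "k2 < k"
          then have "CA k2 = CB k2" using IH k2 by auto
          then have "k2 = k" using inj1 k2 kN by simp
          then show False using \<open>k2 < k\<close> by simp
        qed
        moreover have "k2 \<noteq> k" using ne k2 by auto
        ultimately show ?thesis by linarith
      qed
      have "k < k1"
      proof -
        have "\<not> k1 < k"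
        proof
          assume "k1 < k"
          then have "CA k1 = CB k1" using IH k1 by auto
          then have "k1 = k" using inj2 k1 kN by simp
          then show False using \<open>k1 < k\<close> by simp
        qed
        moreover have "k1 \<noteq> k" using ne k1 by auto
        ultimately show ?thesis by linarith
      qed
      have kk: "k \<in> {1..N}" using kN by auto
      have sub1: "CA k \<subseteq> {1..<k}" using s1[OF kk] .
      have sub2: "CB k \<subseteq> {1..<k}" using s2[OF kk] .
      have ag1: "HA ` CA k = HB ` CA k"
      proof (rule image_cong[OF refl])
        fix x assume "x \<in> CA k" then have "x \<in> {1..<k}" using sub1 by blast
        then show "HA x = HB x" using Hag kN by auto
      qed
      have ag2: "HA ` CB k = HB ` CB k"
      proof (rule image_cong[OF refl])
        fix x assume "x \<in> CB k" then have "x \<in> {1..<k}" using sub2 by blast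
        then show "HA x = HB x" using Hag kN by auto
      qed
      have Ha: "HB k2 = HA k" using h2r[OF k2(1)] h1r[OF kN] k2(2) ag1 by simp
      have Hb: "HA k1 = HB k" using h1r[OF k1(1)] h2r[OF kN] k1(2) ag2 by simp
      have "k \<noteq> k1" using \<open>k < k1\<close> by simp
      moreover have "k1 \<in> {1..N}" using k1 by auto
      ultimately have dj: "CA k \<inter> CA k1 = {}" using d1 kk by blast
      have fin1: "finite (CA k)" using sub1 finite_subset by blast
      have fin2: "finite (CB k)" using sub2 finite_subset by blast
      have "Min (CA k) \<in> CA k" using fin1 ne1[OF kN] by simp
      moreover have "Min (CB k) \<in> CB k" using fin2 ne2[OF kN] by simp
      ultimately have mne: "Min (CA k) \<noteq> Min (CB k)" using dj k1(2) by auto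
      have t1: "\<not> HA k1 < HA k" using m1a[OF k1(1) kN] \<open>k < k1\<close> by auto
      have t2: "\<not> (HA k1 = HA k \<and> Min (CB k) < Min (CA k))"
        using m1b[OF k1(1) kN] k1(2) \<open>k < k1\<close> by auto
      have t3: "\<not> HB k2 < HB k" using m2a[OF k2(1) kN] \<open>k < k2\<close> by auto
      have t4: "\<not> (HB k2 = HB k \<and> Min (CA k) < Min (CB k))"
        using m2b[OF k2(1) kN] k2(2) \<open>k < k2\<close> by auto
      show False using t1 t2 t3 t4 Ha Hb mne by linarith
    qed
  qed
qed




theorem proposition1:
  fixes n :: nat and T1 :: "'a ltree" and T2 :: "'b ltree"
  assumes "phylo_tree n T1" and "phylo_tree n T2"
    and "\<forall>i \<in> {1..2 * n - 2}. matching_perm T1 i = matching_perm T2 i"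
  shows "tree_iso T1 T2"
proof -
  interpret P1: ptree n T1 by (rule ptree.intro) (fact assms(1))
  interpret P2: ptree n T2 by (rule ptree.intro) (fact assms(2))
  define N1 where "N1 = card (verts T1)"
  define N2 where "N2 = card (verts T2)"
  have peq: "matching_perm T1 i = matching_perm T2 i" for i
  proof (cases "i \<in> {1..2 * n - 2}")
    case True
    then show ?thesis using assms(3) by blast
  next
    case False
    then have "i \<notin> \<Union>(P1.Cl ` {n<..N1})" "i \<notin> \<Union>(P2.Cl ` {n<..N2})"
      using P1.blocks_range P2.blocks_range unfolding N1_def N2_def by blast+
    then show ?thesis using P1.mp_out P2.mp_out unfolding N1_def N2_def by simp
  qed
  then have pe: "matching_perm T1 = matching_perm T2" by (rule ext)
  have sub12: "S \<in> P2.Cl ` {n<..N2}" if S: "S \<in> P1.Cl ` {n<..N1}" for S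
  proof -
    obtain k where k: "k \<in> {n<..N1}" "S = P1.Cl k" using S by blast
    have c2: "2 \<le> card S" using P1.Ccard k unfolding N1_def by simp
    then obtain x where x: "x \<in> S" by (metis card.empty empty_iff ex_in_conv not_numeral_le_zero)
    have o1: "orb (matching_perm T1) x = S" using P1.orb_block k x unfolding N1_def by simp
    show ?thesis
    proof (cases "x \<in> \<Union>(P2.Cl ` {n<..N2})")
      case True
      then obtain k' where k': "k' \<in> {n<..N2}" "x \<in> P2.Cl k'" by blast
      have "orb (matching_perm T2) x = P2.Cl k'" using P2.orb_block k' unfolding N2_def by simp
      then have "S = P2.Cl k'" using o1 pe by simp
      then show ?thesis using k' by blast
    next
      case False
      then have "matching_perm T2 x = x" using P2.mp_out unfolding N2_def by simp
      then have "orb (matching_perm T2) x = {x}" by (rule orb_fix)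
      then have "S = {x}" using o1 pe by simp
      then show ?thesis using c2 by simp
    qed
  qed
  have sub21: "S \<in> P1.Cl ` {n<..N1}" if S: "S \<in> P2.Cl ` {n<..N2}" for S
  proof -
    obtain k where k: "k \<in> {n<..N2}" "S = P2.Cl k" using S by blast
    have c2: "2 \<le> card S" using P2.Ccard k unfolding N2_def by simp
    then obtain x where x: "x \<in> S" by (metis card.empty empty_iff ex_in_conv not_numeral_le_zero)
    have o1: "orb (matching_perm T2) x = S" using P2.orb_block k x unfolding N2_def by simp
    show ?thesis
    proof (cases "x \<in> \<Union>(P1.Cl ` {n<..N1})")
      case True
      then obtain k' where k': "k' \<in> {n<..N1}" "x \<in> P1.Cl k'" by blast
      have "orb (matching_perm T1) x = P1.Cl k'" using P1.orb_block k' unfolding N1_def by simp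
      then have "S = P1.Cl k'" using o1 pe by simp
      then show ?thesis using k' by blast
    next
      case False
      then have "matching_perm T1 x = x" using P1.mp_out unfolding N1_def by simp
      then have "orb (matching_perm T1) x = {x}" by (rule orb_fix)
      then have "S = {x}" using o1 pe by simp
      then show ?thesis using c2 by simp
    qed
  qed
  have B: "P1.Cl ` {n<..N1} = P2.Cl ` {n<..N2}" using sub12 sub21 by blast
  have inj1: "inj_on P1.Cl {n<..N1}"
  proof (rule inj_onI)
    fix a b assume a: "a \<in> {n<..N1}" and b: "b \<in> {n<..N1}" and e: "P1.Cl a = P1.Cl b"
    show "a = b"
    proof (rule ccontr)
      assume "a \<noteq> b"
      moreover have "a \<in> {1..N1}" "b \<in> {1..N1}" using a b by auto
      ultimately have "P1.Cl a \<inter> P1.Cl b = {}" using P1.Disj unfolding N1_def by blast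
      moreover have "P1.Cl a \<noteq> {}" using P1.Cl_empty[of a] a unfolding N1_def by auto
      ultimately show False using e by simp
    qed
  qed
  have inj2: "inj_on P2.Cl {n<..N2}"
  proof (rule inj_onI)
    fix a b assume a: "a \<in> {n<..N2}" and b: "b \<in> {n<..N2}" and e: "P2.Cl a = P2.Cl b"
    show "a = b"
    proof (rule ccontr)
      assume "a \<noteq> b"
      moreover have "a \<in> {1..N2}" "b \<in> {1..N2}" using a b by auto
      ultimately have "P2.Cl a \<inter> P2.Cl b = {}" using P2.Disj unfolding N2_def by blast
      moreover have "P2.Cl a \<noteq> {}" using P2.Cl_empty[of a] a unfolding N2_def by auto
      ultimately show False using e by simp
    qed
  qed
  have "card (P1.Cl ` {n<..N1}) = N1 - n" using card_image[OF inj1] by simp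
  moreover have "card (P2.Cl ` {n<..N2}) = N2 - n" using card_image[OF inj2] by simp
  moreover have "n \<le> N1" "n \<le> N2" using P1.n_le P2.n_le unfolding N1_def N2_def by auto
  ultimately have NN: "N1 = N2" using B by simp
  have N1e: "card (verts T1) = N1" using N1_def by simp
  have N2e: "card (verts T2) = N1" using N2_def NN by simp
  note facts = P1.Cl_empty P2.Cl_empty P1.Cl_sub P2.Cl_sub P1.Hl_leaf P2.Hl_leaf P1.Hl_rec P2.Hl_rec
        P1.M1 P2.M1 P1.M2 P2.M2 P1.Disj P2.Disj
  note facts' = facts[unfolded N1e N2e]
  have B': "P1.Cl ` {n<..N1} = P2.Cl ` {n<..N1}" using B NN by simp
  have Ceq: "P1.Cl k = P2.Cl k" if "k \<in> {1..N1}" for k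
    by (rule recon[where CA=P1.Cl and CB=P2.Cl and HA=P1.Hl and HB=P2.Hl and n=n and N=N1 and k=k])
      (fact facts' B' that)+
  let ?l1 = "bottom_up T1" and ?l2 = "bottom_up T2"
  define f where "f = inv_into (verts T2) ?l2 \<circ> ?l1"
  have bij1: "bij_betw ?l1 (verts T1) {1..N1}" using P1.bl_inj P1.bl_img unfolding N1_def bij_betw_def by simp
  have bij2: "bij_betw ?l2 (verts T2) {1..N1}" using P2.bl_inj P2.bl_img NN unfolding N2_def bij_betw_def by simp
  have fbij: "bij_betw f (verts T1) (verts T2)" unfolding f_def
    by (rule bij_betw_trans[OF bij1 bij_betw_inv_into[OF bij2]])
  have img2: "?l2 ` verts T2 = {1..N1}" using bij2 by (simp add: bij_betw_def)
  have l1r: "?l1 u \<in> {1..N1}" if "u \<in> verts T1" for u using bij1 that by (auto simp: bij_betw_def)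
  have fV: "f u \<in> verts T2" if "u \<in> verts T1" for u
    unfolding f_def using l1r[OF that] img2 by (simp add: inv_into_into)
  have fl: "?l2 (f u) = ?l1 u" if "u \<in> verts T1" for u
    unfolding f_def using l1r[OF that] img2 by (simp add: f_inv_into_f)
  have arc: "(u, v) \<in> arcs T1 \<longleftrightarrow> (f u, f v) \<in> arcs T2" if u: "u \<in> verts T1" and v: "v \<in> verts T1" for u v
  proof -
    have "(u, v) \<in> arcs T1 \<longleftrightarrow> v \<in> children T1 u" by (simp add: children_def)
    also have "\<dots> \<longleftrightarrow> ?l1 v \<in> ?l1 ` children T1 u"
      using inj_on_image_mem_iff[OF P1.bl_inj v P1.ch_sub] by simp
    also have "?l1 ` children T1 u = P1.Cl (?l1 u)" using P1.Cl_eq[OF u] by simp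
    also have "\<dots> = P2.Cl (?l1 u)" using Ceq l1r[OF u] by simp
    also have "\<dots> = P2.Cl (?l2 (f u))" using fl[OF u] by simp
    also have "\<dots> = ?l2 ` children T2 (f u)" using P2.Cl_eq[OF fV[OF u]] by simp
    also have "?l1 v = ?l2 (f v)" using fl[OF v] by simp
    also have "?l2 (f v) \<in> ?l2 ` children T2 (f u) \<longleftrightarrow> f v \<in> children T2 (f u)"
      using inj_on_image_mem_iff[OF P2.bl_inj fV[OF v] P2.ch_sub] by simp
    also have "\<dots> \<longleftrightarrow> (f u, f v) \<in> arcs T2" by (simp add: children_def)
    finally show ?thesis .
  qed
  have froot: "f (root T1) = root T2"
  proof (rule ccontr)
    assume ne: "f (root T1) \<noteq> root T2"
    have fr: "f (root T1) \<in> verts T2" using fV P1.rV by blast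
    then obtain p where p: "(p, f (root T1)) \<in> arcs T2" using P2.uparent ne by blast
    have "p \<in> verts T2" using p P2.arcV1 by blast
    then obtain u where u: "u \<in> verts T1" "p = f u" using fbij by (auto simp: bij_betw_def)
    have "(u, root T1) \<in> arcs T1" using arc[OF u(1) P1.rV] p u(2) by simp
    then show False using P1.noparent by blast
  qed
  have flab: "label T2 (f v) = label T1 v" if v: "v \<in> leaves T1" for v
  proof -
    have vV: "v \<in> verts T1" using v P1.leaves_sub by blast
    have "?l1 v \<le> n" using P1.leaf_lab[OF vV] v by simp
    then have "?l2 (f v) \<le> n" using fl[OF vV] by simp
    then have fv: "f v \<in> leaves T2" using P2.leaf_lab[OF fV[OF vV]] by simp
    have "label T2 (f v) = ?l2 (f v)" using P2.bu_leaf[OF P2.bl_bu fv] by simp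
    also have "\<dots> = ?l1 v" using fl[OF vV] .
    also have "\<dots> = label T1 v" using P1.bu_leaf[OF P1.bl_bu v] .
    finally show ?thesis .
  qed
  show ?thesis unfolding tree_iso_def
    using fbij froot arc flab by blast
qed


end
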